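(* Let $\mathcal S\subseteq\mathcal X\cup\mathcal Y\cup\mathcal Z$ be a set of items with $w_Z(\mathcal S)\le t-1$ and $p_Z(\mathcal S)\ge t-1$. Then there exists $i\in\{0,\dots,t-1\}$ such that $\mathcal S\cap\mathcal Z=\mathcal Z_i$.
   Context: Let $n\ge1$, $B_n=\sum_{j=1}^{3n}(3n+1)^j$, $\widetilde{\mathcal A}_n=\{(3n+1)^{j_1}+(3n+1)^{j_2}+(3n+1)^{j_3}: j_1,j_2,j_3\in\{1,\dots,3n\}\}$. Let $t$ be a power of two, $\lg$ the base-2 logarithm, and for $i\in\{0,\dots,t-1\}$ let $\mathcal A_i=\{a^i_1,\dots,a^i_{3n}\}$ be a set of $3n$ integers from $\widetilde{\mathcal A}_n$ with sum $3B_n$. Let $X=3tnB_n$, $B=B_n+nX$, $Y=3t^2nB$, $Z=(\lg t)^2Y^2 3^{(\lg t)^2}$, and fix a bijection $f:\{0,\dots,\lg t-1\}^2\to\{0,\dots,(\lg t)^2-1\}$. Items (weight $w$, profit $p$): encoding items $x^i_j$ ($0\le i\le t-1$, $1\le j\le 3n$) with $w=X+a^i_j$, $p=X+a^i_j+3iB$, forming $\mathcal X$; quadratization items forming $\mathcal Y$: for $0\le k<\ell\le\lg t-1$, $y^{1,0}_{k,\ell}$ with $w=p=3^{f(k,\ell)}Y$, $y^{0,1}_{k,\ell}$ with $w=p=3^{f(\ell,k)}Y$, $y^{1,1}_{k,\ell}$ with $w=(3^{f(k,\ell)}+3^{f(\ell,k)})Y$, $p=w+2^{k+\ell}\cdot9nB$,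 and for $0\le k\le\lg t-1$, $y^{1,1}_{k,k}$ with $w=3^{f(k,k)}Y$, $p=w+2^{2k}\cdot4.5nB+2^k\cdot1.5nB$; index items forming $\mathcal Z$: for $0\le k\le\lg t-1$, $z^0_k$ with $w=p=2^kZ+\sum_{\ell=0}^{\lg t-1}3^{f(k,\ell)}Y$ and $z^1_k$ with $w=p=2^kZ+2^k\cdot 3B$. For an item $x$, $w_Z(x)=\lfloor w(x)/Z\rfloor$ and $p_Z(x)=\lfloor p(x)/Z\rfloor$; for a set $\mathcal S$, $w_Z(\mathcal S)=\sum_{x\in\mathcal S}w_Z(x)$ and $p_Z(\mathcal S)=\sum_{x\in\mathcal S}p_Z(x)$. For $i\in\{0,\dots,t-1\}$ with binary digits $i(0),\dots,i(\lg t-1)$ (so $i=\sum_k i(k)2^k$), $\mathcal Z_i=\{z^{i(k)}_k: 0\le k\le\lg t-1\}$. *)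

theory Defs
  imports Complex_Main
begin

text \<open>Items of the reduction. lg t is represented by L with t = 2^L.
  Zit d k stands for z^d_k (d in {0,1}).  Y11 k k is the diagonal item y^{1,1}_{k,k}.\<close>

datatype item = Xit nat nat | Y10 nat nat | Y01 nat nat | Y11 nat nat | Zit nat nat

definition Bn :: "nat \<Rightarrow> nat" where
  "Bn n = (\<Sum>j=1..3*n. (3*n+1)^j)"

definition Atilde :: "nat \<Rightarrow> nat set" where
  "Atilde n = {(3*n+1)^j1 + (3*n+1)^j2 + (3*n+1)^j3 | j1 j2 j3.
      j1 \<in> {1..3*n} \<and> j2 \<in> {1..3*n} \<and> j3 \<in> {1..3*n}}"

definition Xc :: "nat \<Rightarrow> nat \<Rightarrow> real" where
  "Xc n t = 3 * t * n * Bn n"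

definition Bc :: "nat \<Rightarrow> nat \<Rightarrow> real" where
  "Bc n t = Bn n + n * Xc n t"

definition Yc :: "nat \<Rightarrow> nat \<Rightarrow> real" where
  "Yc n t = 3 * t^2 * n * Bc n t"

definition Zc :: "nat \<Rightarrow> nat \<Rightarrow> nat \<Rightarrow> real" where
  "Zc n t L = L^2 * (Yc n t)^2 * 3^(L^2)"

fun wt :: "nat \<Rightarrow> nat \<Rightarrow> nat \<Rightarrow> (nat \<Rightarrow> nat \<Rightarrow> nat) \<Rightarrow> (nat \<Rightarrow> nat \<Rightarrow> nat) \<Rightarrow> item \<Rightarrow> real" where
  "wt n t L a f (Xit i j) = Xc n t + a i j"
| "wt n t L a f (Y10 k l) = 3^(f k l) * Yc n t"
| "wt n t L a f (Y01 k l) = 3^(f l k) * Yc n t"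
| "wt n t L a f (Y11 k l) =
     (if k = l then 3^(f k k) * Yc n t else (3^(f k l) + 3^(f l k)) * Yc n t)"
| "wt n t L a f (Zit d k) =
     (if d = 0 then 2^k * Zc n t L + (\<Sum>l<L. 3^(f k l) * Yc n t)
      else 2^k * Zc n t L + 2^k * 3 * Bc n t)"

fun pr :: "nat \<Rightarrow> nat \<Rightarrow> nat \<Rightarrow> (nat \<Rightarrow> nat \<Rightarrow> nat) \<Rightarrow> (nat \<Rightarrow> nat \<Rightarrow> nat) \<Rightarrow> item \<Rightarrow> real" where
  "pr n t L a f (Xit i j) = Xc n t + a i j + 3 * i * Bc n t"
| "pr n t L a f (Y10 k l) = wt n t L a f (Y10 k l)"
| "pr n t L a f (Y01 k l) = wt n t L a f (Y01 k l)"
| "pr n t L a f (Y11 k l) =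
     (if k = l then wt n t L a f (Y11 k l) + 2^(2*k) * 4.5 * n * Bc n t + 2^k * 1.5 * n * Bc n t
      else wt n t L a f (Y11 k l) + 2^(k+l) * 9 * n * Bc n t)"
| "pr n t L a f (Zit d k) = wt n t L a f (Zit d k)"

definition wZ :: "nat \<Rightarrow> nat \<Rightarrow> nat \<Rightarrow> (nat \<Rightarrow> nat \<Rightarrow> nat) \<Rightarrow> (nat \<Rightarrow> nat \<Rightarrow> nat) \<Rightarrow> item set \<Rightarrow> int" where
  "wZ n t L a f S = (\<Sum>x\<in>S. \<lfloor>wt n t L a f x / Zc n t L\<rfloor>)"

definition pZ :: "nat \<Rightarrow> nat \<Rightarrow> nat \<Rightarrow> (nat \<Rightarrow> nat \<Rightarrow> nat) \<Rightarrow> (nat \<Rightarrow> nat \<Rightarrow> nat) \<Rightarrow> item set \<Rightarrow> int" where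
  "pZ n t L a f S = (\<Sum>x\<in>S. \<lfloor>pr n t L a f x / Zc n t L\<rfloor>)"

definition Xset :: "nat \<Rightarrow> nat \<Rightarrow> item set" where
  "Xset n t = {Xit i j | i j. i < t \<and> j \<in> {1..3*n}}"

definition Yset :: "nat \<Rightarrow> item set" where
  "Yset L = {Y10 k l | k l. k < l \<and> l < L} \<union> {Y01 k l | k l. k < l \<and> l < L}
           \<union> {Y11 k l | k l. k \<le> l \<and> l < L}"

definition Zset :: "nat \<Rightarrow> item set" where
  "Zset L = {Zit d k | d k. d \<in> {0,1} \<and> k < L}"

definition Zi :: "nat \<Rightarrow> nat \<Rightarrow> item set" where
  "Zi L i = {Zit (i div 2^k mod 2) k | k. k < L}"

end

theory Submission
  imports Defs
begin

lemma digits_one: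
  "(\<And>k. c k \<le> (2::nat)) \<Longrightarrow> (\<Sum>k<L. c k * 2^k) + 1 = (2::nat)^L \<Longrightarrow> k < L \<Longrightarrow> c k = 1"
proof (induction L arbitrary: c k)
  case 0 then show ?case by simp
next
  case (Suc L)
  have e: "(\<Sum>k<Suc L. c k * 2^k) = c 0 + 2 * (\<Sum>k<L. c (Suc k) * 2^k)"
    by (subst sum.lessThan_Suc_shift) (simp add: sum_distrib_left mult.assoc mult.left_commute)
  from Suc.prems(2) e have eq: "c 0 + 2 * (\<Sum>k<L. c (Suc k) * 2^k) + 1 = 2 * 2^L" by simp
  have c0: "c 0 = 1" using eq Suc.prems(1)[of 0] by presburger
  with eq have eq2: "(\<Sum>k<L. c (Suc k) * 2^k) + 1 = 2^L" by simp
  show ?case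
  proof (cases k)
    case 0 then show ?thesis using c0 by simp
  next
    case (Suc k')
    then have "k' < L" using Suc.prems(3) by simp
    from Suc.IH[of "\<lambda>k. c (Suc k)", OF _ eq2 this] Suc.prems(1) show ?thesis using Suc by simp
  qed
qed

lemma digits_val:
  "(\<And>k. b k \<le> (1::nat)) \<Longrightarrow> m < L \<Longrightarrow> (\<Sum>k<L. b k * 2^k) div 2^m mod 2 = b m"
proof (induction L arbitrary: b m)
  case 0 then show ?case by simp
next
  case (Suc L)
  have e: "(\<Sum>k<Suc L. b k * 2^k) = b 0 + 2 * (\<Sum>k<L. b (Suc k) * 2^k)"
    by (subst sum.lessThan_Suc_shift) (simp add: sum_distrib_left mult.assoc mult.left_commute)
  have b0: "b 0 \<le> 1" by (rule Suc.prems(1))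
  show ?case
  proof (cases m)
    case 0 then show ?thesis using e b0 by simp
  next
    case (Suc m')
    have d2: "(b 0 + 2 * (\<Sum>k<L. b (Suc k) * 2^k)) div 2 = (\<Sum>k<L. b (Suc k) * 2^k)"
      using b0 by presburger
    have "(\<Sum>k<Suc L. b k * 2^k) div 2^m = ((b 0 + 2 * (\<Sum>k<L. b (Suc k) * 2^k)) div 2) div 2^m'"
      using Suc e by (simp add: div_mult2_eq)
    also have "\<dots> = (\<Sum>k<L. b (Suc k) * 2^k) div 2^m'" using d2 by simp
    finally show ?thesis using Suc.IH[of "\<lambda>k. b (Suc k)" m'] Suc.prems \<open>m = Suc m'\<close> by simp
  qed
qed

lemma digits_lt:
  "(\<And>k. b k \<le> (1::nat)) \<Longrightarrow> (\<Sum>k<L. b k * 2^k) < 2^L"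
proof (induction L arbitrary: b)
  case 0 then show ?case by simp
next
  case (Suc L)
  have e: "(\<Sum>k<Suc L. b k * 2^k) = b 0 + 2 * (\<Sum>k<L. b (Suc k) * 2^k)"
    by (subst sum.lessThan_Suc_shift) (simp add: sum_distrib_left mult.assoc mult.left_commute)
  have "(\<Sum>k<L. b (Suc k) * 2^k) < 2^L" using Suc.IH[of "\<lambda>k. b (Suc k)"] Suc.prems by simp
  then show ?case using e Suc.prems(1)[of 0] by simp
qed

lemma floor_zero: "(0::real) \<le> w \<Longrightarrow> w < Z \<Longrightarrow> \<lfloor>w / Z\<rfloor> = 0"
  by (simp add: floor_eq_iff)

lemma floor_shift: "(0::real) < Z \<Longrightarrow> 0 \<le> r \<Longrightarrow> r < Z \<Longrightarrow> \<lfloor>(2^k * Z + r) / Z\<rfloor> = 2^k"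
proof -
  assume a: "(0::real) < Z" "0 \<le> r" "r < Z"
  have "(2^k * Z + r) / Z = of_int (2^k) + r / Z" using a by (simp add: field_simps)
  moreover have "\<lfloor>r / Z\<rfloor> = 0" using a by (simp add: floor_eq_iff)
  ultimately show ?thesis by simp
qed


theorem lemma5:
  fixes n t L :: nat and a f :: "nat \<Rightarrow> nat \<Rightarrow> nat" and S :: "item set"
  assumes "n \<ge> 1"
    and "t = 2^L"
    and "\<And>i. i < t \<Longrightarrow> card (a i ` {1..3*n}) = 3*n"
    and "\<And>i. i < t \<Longrightarrow> a i ` {1..3*n} \<subseteq> Atilde n"
    and "\<And>i. i < t \<Longrightarrow> (\<Sum>j=1..3*n. a i j) = 3 * Bn n"
    and "bij_betw (\<lambda>(k, l). f k l) ({0..<L} \<times> {0..<L}) {0..<L^2}"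
    and "S \<subseteq> Xset n t \<union> Yset L \<union> Zset L"
    and "wZ n t L a f S \<le> int t - 1"
    and "pZ n t L a f S \<ge> int t - 1"
  shows "\<exists>i\<in>{0..<t}. S \<inter> Zset L = Zi L i"
proof (cases "L = 0")
  case True
  then show ?thesis using assms(2) by (auto simp: Zset_def Zi_def)
next
  case False
  define X where "X = Xc n t"
  define B where "B = Bc n t"
  define Y where "Y = Yc n t"
  define Z where "Z = Zc n t L"
  define K where "K = (3::real)^(L^2)"
  have t2: "t \<ge> 2"
  proof -
    have "(2::nat)^1 \<le> 2^L" by (rule power_increasing) (use False in auto)
    then show ?thesis using assms(2) by simp
  qed
  have n1: "real n \<ge> 1" using assms(1) by simp
  have Bn1: "real (Bn n) \<ge> 1"
  proof -
    have "(3*n+1)^1 \<le> Bn n" unfolding Bn_def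
      by (rule member_le_sum) (use assms(1) in auto)
    then show ?thesis by simp
  qed
  have aBn: "real (a i j) \<le> 3 * real (Bn n)" if "i < t" "j \<in> {1..3*n}" for i j
  proof -
    have "a i j \<in> Atilde n" using assms(4)[OF that(1)] that(2) by auto
    then obtain j1 j2 j3 where a: "a i j = (3*n+1)^j1 + (3*n+1)^j2 + (3*n+1)^j3"
      and j: "j1 \<in> {1..3*n}" "j2 \<in> {1..3*n}" "j3 \<in> {1..3*n}"
      unfolding Atilde_def by blast
    have le: "(3*n+1)^jj \<le> Bn n" if "jj \<in> {1..3*n}" for jj
      unfolding Bn_def by (rule member_le_sum) (use that in auto)
    have "a i j \<le> 3 * Bn n" using a le[OF j(1)] le[OF j(2)] le[OF j(3)] by linarith
    then show ?thesis by (metis of_nat_le_iff of_nat_mult of_nat_numeral)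
  qed
  have hX: "X = 3 * t * n * Bn n" unfolding X_def Xc_def by simp
  have X0: "X \<ge> 0" using hX by simp
  have hB: "B = Bn n + n * X" unfolding B_def Bc_def X_def by simp
  have "real n * X \<ge> 1 * X" using n1 X0 by (intro mult_right_mono) auto
  then have BX: "B \<ge> X" using hB Bn1 by simp
  have BBn: "B \<ge> Bn n" using hB n1 X0 by simp
  have B1: "B \<ge> 1" using BBn Bn1 by simp
  have hY: "Y = 3 * t^2 * n * B" unfolding Y_def Yc_def B_def by simp
  have tn2: "real t * real n \<ge> 2"
  proof -
    have "real t \<ge> 2" using t2 by simp
    then have "real t * real n \<ge> 2 * 1" using n1 by (intro mult_mono) auto
    then show ?thesis by simp
  qed
  have Y6: "Y \<ge> 6 * t * B"
  proof -
    have "Y = 3 * t * (t * n) * B" using hY by (simp add: power2_eq_square)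
    also have "\<dots> \<ge> 3 * t * 2 * B"
    proof -
      have "(3 * real t) * (real t * real n) \<ge> (3 * real t) * 2" using tn2 by (intro mult_left_mono) auto
      then show ?thesis using B1 by (intro mult_right_mono) auto
    qed
    finally show ?thesis by simp
  qed
  have Y12: "Y \<ge> 12"
  proof -
    have "real t \<ge> 2" using t2 by simp
    then have "real t * B \<ge> 2 * 1" using B1 by (intro mult_mono) auto
    moreover have "6 * real t * B = 6 * (real t * B)" by simp
    ultimately show ?thesis using Y6 by linarith
  qed
  have K3: "K \<ge> 3"
  proof -
    have "(3::real)^1 \<le> 3^(L^2)" by (rule power_increasing) (use False in auto)
    then show ?thesis unfolding K_def by simp
  qed
  have hZ: "Z = L^2 * Y^2 * K" unfolding Z_def Zc_def Y_def K_def by simp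
  have L1: "real L \<ge> 1" using False by simp
  have LL: "real L * real L \<ge> 1" using mult_mono[OF L1 L1] by simp
  have ZKY: "Z \<ge> 12 * K * Y"
  proof -
    have "Z = (L*L) * Y * (K * Y)" using hZ by (simp add: power2_eq_square mult_ac)
    also have "\<dots> \<ge> 1 * 12 * (K * Y)"
      using LL Y12 K3 by (intro mult_right_mono mult_mono) auto
    finally show ?thesis by simp
  qed
  have ZLKY: "Z > L * K * Y"
  proof -
    have "Z = (L * Y) * (L * K * Y)" using hZ by (simp add: power2_eq_square mult_ac)
    moreover have "L * Y > 1"
    proof -
      have "L * Y \<ge> 1 * 12" using L1 Y12 by (intro mult_mono) auto
      then show ?thesis by simp
    qed
    moreover have "L * K * Y > 0" using L1 K3 Y12 by simp
    ultimately show ?thesis using mult_strict_right_mono[of 1 "L*Y" "L*K*Y"] by simp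
  qed
  have KY: "K * Y \<ge> 3 * 12" using K3 Y12 by (intro mult_mono) auto
  have "K * Y \<ge> 1 * Y" using K3 Y12 by (intro mult_right_mono) auto
  then have YZ: "Y < Z" using ZKY KY Y12 by linarith
  have Z0: "Z > 0" using YZ Y12 by simp
  have fb: "f k l < L^2" if "k < L" "l < L" for k l
    using bij_betw_apply[OF assms(6), of "(k,l)"] that by auto
  have fK: "(3::real)^(f k l) \<le> K" if "k < L" "l < L" for k l
    unfolding K_def using fb[OF that] by (intro power_increasing) auto
  have p2t: "(2::real)^k \<le> real t" if "k < L" for k
  proof -
    have "(2::nat)^k \<le> 2^L" using that by (intro power_increasing) auto
    then have "real ((2::nat)^k) \<le> real t" using assms(2) by (simp only: of_nat_le_iff)
    then show ?thesis by simp
  qed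
  have Y0: "Y \<ge> 0" using Y12 by simp
  have nB0: "real n * B \<ge> 0" using B1 by simp
  have Yt: "Y = 3 * (real t)^2 * (real n * B)" using hY by simp
  have small: "0 \<le> wt n t L a f x \<and> wt n t L a f x < Z \<and> 0 \<le> pr n t L a f x \<and> pr n t L a f x < Z"
    if xS: "x \<in> Xset n t \<union> Yset L" for x
  proof (cases x)
    case (Xit i j)
    then have ij: "i < t" "j \<in> {1..3*n}" using xS by (auto simp: Xset_def Yset_def)
    have a3: "real (a i j) \<le> 3 * B" using aBn[OF ij] BBn by simp
    have "real i \<le> real t - 1" using ij(1) by simp
    then have iB: "real i * B \<le> (real t - 1) * B" using B1 by (intro mult_right_mono) auto
    have "X + a i j + 3 * i * B \<le> B + 3 * B + 3 * ((real t - 1) * B)"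
      using BX a3 iB by simp
    also have "\<dots> = B + 3 * (real t * B)" by (simp add: algebra_simps)
    also have "\<dots> < 6 * (real t * B)"
    proof -
      have "real t * B \<ge> 2 * B" using t2 B1 by (intro mult_right_mono) auto
      then show ?thesis using B1 by linarith
    qed
    also have "\<dots> \<le> Y" using Y6 by simp
    finally have "X + a i j + 3 * i * B < Z" using YZ by simp
    moreover have "0 \<le> 3 * real i * B" using B1 by simp
    ultimately have "X + a i j < Z" by linarith
    with \<open>X + a i j + 3 * i * B < Z\<close> show ?thesis using Xit X0 B1 unfolding X_def B_def Z_def by simp
  next
    case (Y10 k l)
    then have kl: "k < L" "l < L" using xS by (auto simp: Xset_def Yset_def)
    have "3^(f k l) * Y \<le> K * Y" using fK[OF kl] Y0 by (intro mult_right_mono) auto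
    then show ?thesis using Y10 Y0 ZKY KY unfolding Y_def by simp
  next
    case (Y01 k l)
    then have kl: "k < L" "l < L" using xS by (auto simp: Xset_def Yset_def)
    have "3^(f l k) * Y \<le> K * Y" using fK[OF kl(2,1)] Y0 by (intro mult_right_mono) auto
    then show ?thesis using Y01 Y0 ZKY KY unfolding Y_def by simp
  next
    case (Y11 k l)
    then have kl: "k < L" "l < L" using xS by (auto simp: Xset_def Yset_def)
    show ?thesis
    proof (cases "k = l")
      case True
      have w: "3^(f k k) * Y \<le> K * Y" using fK[OF kl(1) kl(1)] Y0 by (intro mult_right_mono) auto
      have tt: "real t \<le> (real t)^2" using t2 by (simp add: power2_eq_square)
      have e1: "(2::real)^(2*k) \<le> (real t)^2"
      proof -
        have "(2::real)^(2*k) = (2^k)^2" by (metis power_mult mult.commute)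
        also have "\<dots> \<le> (real t)^2" using p2t[OF kl(1)] by (intro power_mono) auto
        finally show ?thesis .
      qed
      have e2: "(2::real)^k \<le> (real t)^2" by (rule order_trans[OF p2t[OF kl(1)] tt])
      have "2^(2*k) * 4.5 * n * B + 2^k * 1.5 * n * B = 4.5 * (2^(2*k) * (n * B)) + 1.5 * (2^k * (n*B))"
        by simp
      also have "\<dots> \<le> 4.5 * ((real t)^2 * (n * B)) + 1.5 * ((real t)^2 * (n*B))"
        using e1 e2 nB0 by (intro add_mono mult_left_mono mult_right_mono) auto
      also have "\<dots> = 2 * Y" using Yt by simp
      finally have "2^(2*k) * 4.5 * n * B + 2^k * 1.5 * n * B \<le> 2 * Y" .
      moreover have "2 * Y \<le> K * Y" using K3 Y0 by (intro mult_right_mono) auto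
      moreover have "0 \<le> 2^(2*k) * 4.5 * n * B + 2^k * 1.5 * n * B" using B1
        by (intro add_nonneg_nonneg mult_nonneg_nonneg) auto
      moreover have "wt n t L a f x = 3^(f k k) * Y" using Y11 True unfolding Y_def by simp
      moreover have "pr n t L a f x = 3^(f k k) * Y + (2^(2*k) * 4.5 * n * B + 2^k * 1.5 * n * B)"
        using Y11 True unfolding Y_def B_def by simp
      moreover have "0 \<le> 3^(f k k) * Y" using Y0 by simp
      ultimately show ?thesis using w ZKY KY by linarith
    next
      case False
      have w: "(3^(f k l) + 3^(f l k)) * Y \<le> (K + K) * Y" using fK[OF kl] fK[OF kl(2,1)] Y0
        by (intro mult_right_mono) auto
      have e1: "(2::real)^(k+l) \<le> (real t)^2"
        using mult_mono[OF p2t[OF kl(1)] p2t[OF kl(2)]] by (simp add: power_add power2_eq_square)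
      have "2^(k+l) * 9 * n * B = 9 * (2^(k+l) * (n * B))" by simp
      also have "\<dots> \<le> 9 * ((real t)^2 * (n * B))"
        using e1 nB0 by (intro mult_left_mono mult_right_mono) auto
      also have "\<dots> = 3 * Y" using Yt by simp
      finally have "2^(k+l) * 9 * n * B \<le> 3 * Y" .
      moreover have "3 * Y \<le> K * Y" using K3 Y0 by (intro mult_right_mono) auto
      moreover have "0 \<le> (3^(f k l) + 3^(f l k)) * Y" using Y0 by simp
      moreover have "0 \<le> 2^(k+l) * 9 * n * B" using B1
        by (intro add_nonneg_nonneg mult_nonneg_nonneg) auto
      moreover have "wt n t L a f x = (3^(f k l) + 3^(f l k)) * Y" using Y11 False unfolding Y_def by simp
      moreover have "pr n t L a f x = (3^(f k l) + 3^(f l k)) * Y + 2^(k+l) * 9 * n * B"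
        using Y11 False unfolding Y_def B_def by simp
      moreover have "(K+K)*Y = 2*(K*Y)" "12*K*Y = 12*(K*Y)" by (simp_all add: algebra_simps)
      ultimately show ?thesis using w ZKY KY by linarith
    qed
  next
    case (Zit d k)
    then show ?thesis using xS by (auto simp: Xset_def Yset_def)
  qed
  have zfl: "\<lfloor>wt n t L a f (Zit d k) / Z\<rfloor> = 2^k \<and> \<lfloor>pr n t L a f (Zit d k) / Z\<rfloor> = 2^k"
    if "d \<in> {0,1}" "k < L" for d k
  proof (cases "d = 0")
    case True
    have r0: "0 \<le> (\<Sum>l<L. 3^(f k l) * Y)" using Y0 by (intro sum_nonneg) auto
    have "(\<Sum>l<L. 3^(f k l) * Y) \<le> (\<Sum>l<L. K * Y)"
      using fK[OF that(2)] Y0 by (intro sum_mono mult_right_mono) auto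
    also have "\<dots> = L * K * Y" by simp
    finally have "(\<Sum>l<L. 3^(f k l) * Y) < Z" using ZLKY by linarith
    then have "\<lfloor>(2^k * Z + (\<Sum>l<L. 3^(f k l) * Y)) / Z\<rfloor> = 2^k"
      using floor_shift Z0 r0 by blast
    then show ?thesis using True unfolding Z_def Y_def by simp
  next
    case False
    then have d1: "d = 1" using that by simp
    have r0: "0 \<le> 2^k * 3 * B" using B1 by simp
    have "2^k * 3 * B \<le> real t * 3 * B" using p2t[OF that(2)] B1 by (intro mult_right_mono) auto
    also have "\<dots> < Y"
    proof -
      have "real t * B > 0" using B1 t2 by simp
      moreover have "real t * 3 * B = 3 * (real t * B)" "6 * real t * B = 6 * (real t * B)" by simp_all
      ultimately show ?thesis using Y6 by linarith
    qed
    finally have "2^k * 3 * B < Z" using YZ by linarith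
    then have "\<lfloor>(2^k * Z + 2^k * 3 * B) / Z\<rfloor> = 2^k"
      using floor_shift Z0 r0 by blast
    then show ?thesis using d1 unfolding Z_def B_def by simp
  qed
  have finS: "finite S"
  proof -
    have "Xset n t \<subseteq> (\<lambda>(i,j). Xit i j) ` ({..<t} \<times> {1..3*n})" by (auto simp: Xset_def)
    then have f1: "finite (Xset n t)" by (rule finite_subset) auto
    have "Yset L \<subseteq> (\<lambda>(k,l). Y10 k l) ` ({..<L} \<times> {..<L}) \<union> (\<lambda>(k,l). Y01 k l) ` ({..<L} \<times> {..<L})
        \<union> (\<lambda>(k,l). Y11 k l) ` ({..<L} \<times> {..<L})" by (auto simp: Yset_def)
    then have f2: "finite (Yset L)" by (rule finite_subset) auto
    have "Zset L \<subseteq> (\<lambda>(d,k). Zit d k) ` ({0,1} \<times> {..<L})" by (auto simp: Zset_def)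
    then have f3: "finite (Zset L)" by (rule finite_subset) auto
    show ?thesis using f1 f2 f3 assms(7) finite_subset by blast
  qed
  define g where "g x = \<lfloor>wt n t L a f x / Z\<rfloor>" for x
  define h where "h x = \<lfloor>pr n t L a f x / Z\<rfloor>" for x
  have g0: "sum g (S - Zset L) = 0"
    by (rule sum.neutral) (use small assms(7) in \<open>auto simp: g_def floor_zero\<close>)
  have h0: "sum h (S - Zset L) = 0"
    by (rule sum.neutral) (use small assms(7) in \<open>auto simp: h_def floor_zero\<close>)
  have wsum: "wZ n t L a f S = sum g (S \<inter> Zset L)"
    using sum.Int_Diff[OF finS, of g "Zset L"] g0 unfolding wZ_def g_def Z_def by simp
  have psum: "pZ n t L a f S = sum h (S \<inter> Zset L)"
    using sum.Int_Diff[OF finS, of h "Zset L"] h0 unfolding pZ_def h_def Z_def by simp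
  have gh: "sum g (S \<inter> Zset L) = sum h (S \<inter> Zset L)"
  proof (rule sum.cong)
    fix x assume "x \<in> S \<inter> Zset L"
    then obtain d k where "x = Zit d k" "d \<in> {0,1}" "k < L" by (auto simp: Zset_def)
    then show "g x = h x" using zfl[of d k] unfolding g_def h_def by simp
  qed simp
  have G: "sum g (S \<inter> Zset L) = int t - 1" using wsum psum gh assms(8,9) by simp
  define C where "C = {k. k < L \<and> Zit 0 k \<in> S}"
  define D where "D = {k. k < L \<and> Zit 1 k \<in> S}"
  have SZ: "S \<inter> Zset L = Zit 0 ` C \<union> Zit 1 ` D" by (auto simp: Zset_def C_def D_def)
  have finC: "finite C" "finite D" by (auto simp: C_def D_def)
  have zg: "g (Zit d k) = 2^k" if "d \<in> {0,1}" "k < L" for d k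
    using zfl[OF that] unfolding g_def by blast
  have sC: "sum g (Zit 0 ` C) = (\<Sum>k\<in>C. 2^k)"
  proof -
    have "sum g (Zit 0 ` C) = sum (g \<circ> Zit 0) C" by (rule sum.reindex) (auto simp: inj_on_def)
    also have "\<dots> = (\<Sum>k\<in>C. 2^k)" by (rule sum.cong) (use zg in \<open>auto simp: C_def\<close>)
    finally show ?thesis .
  qed
  have sD: "sum g (Zit 1 ` D) = (\<Sum>k\<in>D. 2^k)"
  proof -
    have "sum g (Zit 1 ` D) = sum (g \<circ> Zit 1) D" by (rule sum.reindex) (auto simp: inj_on_def)
    also have "\<dots> = (\<Sum>k\<in>D. 2^k)" by (rule sum.cong) (use zg in \<open>auto simp: D_def\<close>)
    finally show ?thesis .
  qed
  have "sum g (S \<inter> Zset L) = sum g (Zit 0 ` C) + sum g (Zit 1 ` D)"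
    unfolding SZ by (rule sum.union_disjoint) (use finC in auto)
  then have "(\<Sum>k\<in>C. (2::int)^k) + (\<Sum>k\<in>D. 2^k) = int t - 1" using G sC sD by simp
  then have "int (\<Sum>k\<in>C. (2::nat)^k) + int (\<Sum>k\<in>D. 2^k) = int t - 1" by simp
  then have natEq: "(\<Sum>k\<in>C. (2::nat)^k) + (\<Sum>k\<in>D. 2^k) + 1 = 2^L" using assms(2) by linarith
  define c where "c k = (if k \<in> C then 1 else 0) + (if k \<in> D then 1 else (0::nat))" for k
  have CL: "{..<L} \<inter> C = C" "{..<L} \<inter> D = D" by (auto simp: C_def D_def)
  have "(\<Sum>k<L. c k * 2^k) = (\<Sum>k<L. (if k \<in> C then 2^k else 0)) + (\<Sum>k<L. (if k \<in> D then 2^k else 0))"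
    unfolding sum.distrib[symmetric] by (rule sum.cong) (auto simp: c_def)
  also have "\<dots> = (\<Sum>k\<in>C. 2^k) + (\<Sum>k\<in>D. 2^k)"
    using sum.inter_restrict[of "{..<L}" "\<lambda>k. (2::nat)^k" C] sum.inter_restrict[of "{..<L}" "\<lambda>k. (2::nat)^k" D] CL
    by simp
  finally have "(\<Sum>k<L. c k * 2^k) + 1 = 2^L" using natEq by simp
  then have c1: "c k = 1" if "k < L" for k
    by (rule digits_one[rotated]) (use that in \<open>auto simp: c_def\<close>)
  define b where "b k = (if k \<in> D then 1 else (0::nat))" for k
  define i where "i = (\<Sum>k<L. b k * 2^k)"
  have b1: "\<And>k. b k \<le> 1" by (simp add: b_def)
  have it: "i < t" unfolding i_def assms(2) by (rule digits_lt[OF b1])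
  have ib: "i div 2^k mod 2 = b k" if "k < L" for k
    unfolding i_def by (rule digits_val[OF b1 that])
  have CD: "k \<in> C \<longleftrightarrow> k \<notin> D" if "k < L" for k
    using c1[OF that] by (auto simp: c_def split: if_splits)
  have "S \<inter> Zset L = Zi L i"
  proof
    show "S \<inter> Zset L \<subseteq> Zi L i"
    proof
      fix x assume "x \<in> S \<inter> Zset L"
      then consider k where "k \<in> C" "x = Zit 0 k" | k where "k \<in> D" "x = Zit 1 k"
        unfolding SZ by blast
      then show "x \<in> Zi L i"
      proof cases
        case 1
        then have "k < L" by (simp add: C_def)
        then show ?thesis using 1 CD ib unfolding Zi_def b_def by fastforce
      next
        case 2
        then have "k < L" by (simp add: D_def)
        then show ?thesis using 2 CD ib unfolding Zi_def b_def by fastforce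
      qed
    qed
  next
    show "Zi L i \<subseteq> S \<inter> Zset L"
    proof
      fix x assume "x \<in> Zi L i"
      then obtain k where k: "k < L" "x = Zit (i div 2^k mod 2) k" unfolding Zi_def by blast
      show "x \<in> S \<inter> Zset L"
      proof (cases "k \<in> D")
        case True
        then have "x = Zit 1 k" using k ib b_def by simp
        then show ?thesis unfolding SZ using True by blast
      next
        case False
        then have "k \<in> C" using CD k by blast
        moreover have "x = Zit 0 k" using False k ib b_def by simp
        ultimately show ?thesis unfolding SZ by blast
      qed
    qed
  qed
  then show ?thesis using it by auto
qed
end
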